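(* Let $\mathcal F$ be the class of all functions $\mathbb R^p\to\mathbb R^d$ representable by binary trees of depth at most $D$ in which every internal node queries "$x_k\le\theta$?" for some coordinate $k$ and some threshold $\theta\in\{1/\ell,\dots,1-1/\ell\}$ (going left if true, right otherwise), and every leaf assigns an arbitrary output $v\in\mathbb R^d$. Suppose $f^*\in\mathcal F$, $X\in[0,1]^p$, and $X$ has a density bounded below by $\mu_{\min}>0$ on $[0,1]^p$. Then there exists $\kappa$ such that for all $f\in\mathcal F$ and almost all $x$, $$\|f(x)-f^*(x)\|^2\le\kappa\,\mathbb E_X\|f(X)-f^*(X)\|^2.$$
   Context: $X\in\mathbb R^p$ is a random vector, $Y\in\mathbb R^d$ with $\|Y\|\le1$, and $f^*(x)=\mathbb E[Y\mid X=x]$; $\mathbb E_X$ is expectation over $X$; $\ell\ge2$ and $D\ge1$ are fixed integers. *)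

theory Defs
  imports "HOL-Probability.Probability"
begin

datatype ('p, 'v) dtree = Leaf 'v | Node 'p real "('p, 'v) dtree" "('p, 'v) dtree"

fun eval_tree :: "('p, 'v) dtree \<Rightarrow> real ^ 'p \<Rightarrow> 'v" where
  "eval_tree (Leaf v) x = v"
| "eval_tree (Node k \<theta> l r) x = (if x $ k \<le> \<theta> then eval_tree l x else eval_tree r x)"

fun depth :: "('p, 'v) dtree \<Rightarrow> nat" where
  "depth (Leaf v) = 0"
| "depth (Node k \<theta> l r) = Suc (max (depth l) (depth r))"

fun thresholds :: "('p, 'v) dtree \<Rightarrow> real set" where
  "thresholds (Leaf v) = {}"
| "thresholds (Node k \<theta> l r) = insert \<theta> (thresholds l \<union> thresholds r)"

definition grid :: "nat \<Rightarrow> real set" where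
  "grid l = {real j / real l | j. 1 \<le> j \<and> j \<le> l - 1}"

definition tree_class :: "nat \<Rightarrow> nat \<Rightarrow> (real ^ 'p \<Rightarrow> real ^ 'd) set" where
  "tree_class l D = {eval_tree t | t :: ('p, real ^ 'd) dtree.
                       depth t \<le> D \<and> thresholds t \<subseteq> grid l}"

end

theory Submission
  imports Defs
begin

lemma eval_tree_meas: "eval_tree (t :: ('p::finite, 'v::{second_countable_topology,real_normed_vector}) dtree) \<in> borel_measurable borel"
proof (induction t)
  case (Leaf v) then show ?case by simp
next
  case (Node k \<theta> l r)
  have "eval_tree (Node k \<theta> l r) = (\<lambda>x. if x $ k \<le> \<theta> then eval_tree l x else eval_tree r x)"
    by (rule ext) simp
  moreover have "{x \<in> space (borel :: (real^'p) measure). x $ k \<le> \<theta>} \<in> sets borel"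
    by measurable
  ultimately show ?case using Node by (simp add: measurable_If)
qed

lemma eval_tree_bdd: "\<exists>B. \<forall>x. norm (eval_tree (t :: ('p::finite, 'v::real_normed_vector) dtree) x) \<le> B"
proof (induction t)
  case (Leaf v) then show ?case by auto
next
  case (Node k \<theta> l r)
  then obtain B1 B2 where "\<forall>x. norm (eval_tree l x) \<le> B1" "\<forall>x. norm (eval_tree r x) \<le> B2" by blast
  then show ?case by (rule_tac x="max B1 B2" in exI) (auto simp: le_max_iff_disj)
qed

lemma coord_cell:
  fixes r :: real and l :: nat
  assumes "0 \<le> r" "r \<le> 1" "l \<ge> 1"
  shows "\<exists>j::nat. j < l \<and> (\<forall>i::nat. 1 \<le> i \<longrightarrow> (r \<le> real i / real l \<longleftrightarrow> j + 1 \<le> i))"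
proof -
  define c where "c = \<lceil>real l * r\<rceil>"
  have "0 \<le> real l * r" using assms by simp
  then have c0: "c \<ge> 0" unfolding c_def by linarith
  have cl: "c \<le> int l" using assms unfolding c_def
    by (metis ceiling_mono ceiling_of_nat mult_left_le of_nat_0_le_iff)
  define j where "j = nat (max 1 c) - 1"
  have jl: "j < l" using cl assms unfolding j_def by linarith
  have j1: "int (j + 1) = max 1 c" unfolding j_def by simp
  have "r \<le> real i / real l \<longleftrightarrow> j + 1 \<le> i" if "1 \<le> i" for i :: nat
  proof -
    have "r \<le> real i / real l \<longleftrightarrow> real l * r \<le> real i"
      using assms by (simp add: field_simps)
    also have "\<dots> \<longleftrightarrow> c \<le> int i" unfolding c_def
      by (metis ceiling_le_iff of_int_of_nat_eq)
    also have "\<dots> \<longleftrightarrow> max 1 c \<le> int i" using that by simp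
    also have "\<dots> \<longleftrightarrow> j + 1 \<le> i" using j1 by linarith
    finally show ?thesis .
  qed
  then show ?thesis using jl by blast
qed

lemma tree_const:
  fixes t :: "('p::finite, 'v) dtree" and x y :: "real^'p" and J :: "'p \<Rightarrow> nat"
  assumes "thresholds t \<subseteq> grid l"
    and "\<And>k i. 1 \<le> i \<Longrightarrow> (x $ k \<le> real i / real l \<longleftrightarrow> J k + 1 \<le> i)"
    and "\<And>k i. 1 \<le> i \<Longrightarrow> (y $ k \<le> real i / real l \<longleftrightarrow> J k + 1 \<le> i)"
  shows "eval_tree t y = eval_tree t x"
  using assms(1)
proof (induction t)
  case (Leaf v) then show ?case by simp
next
  case (Node k \<theta> l1 r1)
  then have "\<theta> \<in> grid l" by simp
  then obtain i :: nat where i: "1 \<le> i" "\<theta> = real i / real l" unfolding grid_def by auto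
  have "x $ k \<le> \<theta> \<longleftrightarrow> y $ k \<le> \<theta>" using assms(2,3)[OF i(1)] i(2) by simp
  then show ?case using Node by simp
qed

theorem proposition2:
  fixes M :: "'a measure"
    and X :: "'a \<Rightarrow> real ^ 'p"
    and Y :: "'a \<Rightarrow> real ^ 'd"
    and fstar :: "real ^ 'p \<Rightarrow> real ^ 'd"
    and g :: "real ^ 'p \<Rightarrow> ennreal"
    and l D :: nat
    and \<mu>min :: real
  assumes "prob_space M"
    and "l \<ge> 2" and "D \<ge> 1"
    and "X \<in> borel_measurable M" and "Y \<in> borel_measurable M"
    and "\<forall>\<omega>\<in>space M. norm (Y \<omega>) \<le> 1"
    and "\<forall>i. AE \<omega> in M. fstar (X \<omega>) $ i
             = real_cond_exp M (vimage_algebra (space M) X borel) (\<lambda>\<omega>. Y \<omega> $ i) \<omega>"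
    and "fstar \<in> tree_class l D"
    and "\<forall>\<omega>\<in>space M. X \<omega> \<in> cbox 0 1"
    and "distributed M lborel X g"
    and "\<mu>min > 0"
    and "\<forall>x\<in>cbox 0 1. g x \<ge> ennreal \<mu>min"
  shows "\<exists>\<kappa>::real. \<forall>f\<in>tree_class l D.
           AE x in distr M borel X.
             (norm (f x - fstar x))\<^sup>2
               \<le> \<kappa> * (\<integral>\<omega>. (norm (f (X \<omega>) - fstar (X \<omega>)))\<^sup>2 \<partial>M)"
proof -
  interpret P: prob_space M by fact
  let ?n = "DIM(real^'p)"
  define \<kappa> where "\<kappa> = real l ^ ?n / \<mu>min"
  have l1: "l \<ge> 1" using assms(2) by simp
  have lpos: "real l > 0" using l1 by simp
  have Xm: "X \<in> measurable M lborel" using assms(4) by simp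
  have gm: "g \<in> borel_measurable lborel" using distributed_borel_measurable[OF assms(10)] .
  have deq: "distr M lborel X = density lborel g" using distributed_distr_eq_density[OF assms(10)] .
  obtain ts where ts: "fstar = eval_tree ts" "thresholds ts \<subseteq> grid l"
    using assms(8) unfolding tree_class_def by auto
  have "\<forall>f\<in>tree_class l D. AE x in distr M borel X.
             (norm (f x - fstar x))\<^sup>2
               \<le> \<kappa> * (\<integral>\<omega>. (norm (f (X \<omega>) - fstar (X \<omega>)))\<^sup>2 \<partial>M)"
  proof
    fix f :: "real^'p \<Rightarrow> real^'d" assume "f \<in> tree_class l D"
    then obtain t where t: "f = eval_tree t" "thresholds t \<subseteq> grid l"
      unfolding tree_class_def by auto
    define h where "h = (\<lambda>y. (norm (f y - fstar y))\<^sup>2)"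
    define E where "E = (\<integral>\<omega>. h (X \<omega>) \<partial>M)"
    have hm: "h \<in> borel_measurable borel"
      unfolding h_def t ts using eval_tree_meas[of t] eval_tree_meas[of ts] by measurable
    obtain B1 where B1: "\<forall>x. norm (eval_tree t x) \<le> B1" using eval_tree_bdd by blast
    obtain B2 where B2: "\<forall>x. norm (eval_tree ts x) \<le> B2" using eval_tree_bdd by blast
    have hb: "norm (h y) \<le> (B1 + B2)\<^sup>2" for y
    proof -
      have "norm (f y - fstar y) \<le> B1 + B2" unfolding t ts
        using B1 B2 norm_triangle_ineq4[of "eval_tree t y" "eval_tree ts y"] by smt
      then show ?thesis unfolding h_def by (simp add: power_mono)
    qed
    have hXm: "(\<lambda>\<omega>. h (X \<omega>)) \<in> borel_measurable M" using hm assms(4) by measurable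
    have hint: "integrable M (\<lambda>\<omega>. h (X \<omega>))"
      by (rule P.integrable_const_bound[where B="(B1 + B2)\<^sup>2"]) (use hb hXm in auto)
    have main: "h x \<le> \<kappa> * E" if x: "x \<in> cbox 0 1" for x
    proof -
      have "\<forall>k. \<exists>j::nat. j < l \<and> (\<forall>i::nat. 1 \<le> i \<longrightarrow> (x $ k \<le> real i / real l \<longleftrightarrow> j + 1 \<le> i))"
        using x l1 by (intro allI coord_cell) (auto simp: mem_box_cart)
      then obtain J where J: "\<And>k. J k < l" "\<And>k i. 1 \<le> i \<Longrightarrow> (x $ k \<le> real i / real l \<longleftrightarrow> J k + 1 \<le> i)"
        by metis
      define a :: "real^'p" where "a = (\<chi> k. real (J k) / real l)"
      define b :: "real^'p" where "b = (\<chi> k. (real (J k) + 1) / real l)"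
      define B where "B = box a b"
      have cellJ: "1 \<le> i \<Longrightarrow> (y $ k \<le> real i / real l \<longleftrightarrow> J k + 1 \<le> i)" if "y \<in> B" for y k i
      proof -
        have y1: "real (J k) / real l < y $ k" "y $ k < (real (J k) + 1) / real l"
          using that unfolding B_def a_def b_def by (auto simp: mem_box_cart)
        show "1 \<le> i \<Longrightarrow> (y $ k \<le> real i / real l \<longleftrightarrow> J k + 1 \<le> i)"
        proof (cases "J k + 1 \<le> i")
          case True
          then have "(real (J k) + 1) / real l \<le> real i / real l"
            using lpos by (simp add: divide_right_mono)
          then show ?thesis using True y1 by simp
        next
          case False
          then have "real i / real l \<le> real (J k) / real l"
            using lpos by (simp add: divide_right_mono)
          then show ?thesis using False y1 by simp
        qed
      qed
      have hconst: "h y = h x" if "y \<in> B" for y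
        unfolding h_def t ts
        using tree_const[OF t(2), of x J y] tree_const[OF ts(2), of x J y] J(2) cellJ[OF that]
        by simp
      have Bsub: "B \<subseteq> cbox 0 1"
      proof
        fix y assume y: "y \<in> B"
        have "0 \<le> y $ k \<and> y $ k \<le> 1" for k
        proof -
          have "real (J k) / real l < y $ k" "y $ k < (real (J k) + 1) / real l"
            using y unfolding B_def a_def b_def by (auto simp: mem_box_cart)
          moreover have "0 \<le> real (J k) / real l" by simp
          moreover have "(real (J k) + 1) / real l \<le> 1"
            using J(1)[of k] lpos by (simp add: field_simps)
          ultimately show ?thesis by linarith
        qed
        then show "y \<in> cbox 0 1" by (simp add: mem_box_cart)
      qed
      have Bsets: "B \<in> sets borel" unfolding B_def by simp
      have emB: "emeasure lborel B = ennreal ((1 / real l) ^ ?n)"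
      proof -
        have ab: "\<And>e. e \<in> Basis \<Longrightarrow> a \<bullet> e \<le> b \<bullet> e"
          unfolding a_def b_def by (auto simp: Basis_vec_def inner_axis divide_right_mono)
        have "emeasure lborel B = ennreal (\<Prod>e\<in>Basis. (b - a) \<bullet> e)"
          unfolding B_def using emeasure_lborel_box[OF ab] by simp
        also have "(\<Prod>e\<in>(Basis::(real^'p) set). (b - a) \<bullet> e) = (\<Prod>e\<in>(Basis::(real^'p) set). 1 / real l)"
          by (rule prod.cong) (auto simp: Basis_vec_def inner_axis a_def b_def diff_divide_distrib[symmetric])
        also have "\<dots> = (1 / real l) ^ ?n" by simp
        finally show ?thesis .
      qed
      have "emeasure M (X -` B \<inter> space M) = emeasure (distr M lborel X) B"
        using Bsets Xm by (simp add: emeasure_distr)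
      also have "\<dots> = (\<integral>\<^sup>+ y. g y * indicator B y \<partial>lborel)"
        unfolding deq using Bsets gm by (simp add: emeasure_density)
      also have "\<dots> \<ge> (\<integral>\<^sup>+ y. ennreal \<mu>min * indicator B y \<partial>lborel)"
        using Bsub assms(12) by (intro nn_integral_mono) (auto split: split_indicator)
      finally have "emeasure M (X -` B \<inter> space M) \<ge> ennreal \<mu>min * emeasure lborel B"
        using Bsets by (simp add: nn_integral_cmult_indicator)
      then have "ennreal (P.prob (X -` B \<inter> space M)) \<ge> ennreal (\<mu>min * (1 / real l) ^ ?n)"
        using emB assms(11) by (simp add: P.emeasure_eq_measure ennreal_mult)
      then have pB: "P.prob (X -` B \<inter> space M) \<ge> \<mu>min * (1 / real l) ^ ?n"
        by (simp add: ennreal_le_iff)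
      have "(\<integral>\<omega>. h x * indicator (X -` B \<inter> space M) \<omega> \<partial>M) \<le> E"
        unfolding E_def
      proof (rule integral_mono)
        show "integrable M (\<lambda>\<omega>. h x * indicator (X -` B \<inter> space M) \<omega>)"
          using Bsets assms(4) by (intro integrable_mult_right integrable_real_indicator) (auto simp: P.emeasure_eq_measure)
        show "integrable M (\<lambda>\<omega>. h (X \<omega>))" by fact
        fix \<omega> assume "\<omega> \<in> space M"
        then show "h x * indicator (X -` B \<inter> space M) \<omega> \<le> h (X \<omega>)"
          using hconst[of "X \<omega>"] by (auto simp: h_def split: split_indicator)
      qed
      then have "h x * P.prob (X -` B \<inter> space M) \<le> E" by simp
      moreover have "h x * (\<mu>min * (1 / real l) ^ ?n) \<le> h x * P.prob (X -` B \<inter> space M)"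
        using pB by (intro mult_left_mono) (auto simp: h_def)
      ultimately have E1: "h x * (\<mu>min * (1 / real l) ^ ?n) \<le> E" by linarith
      have "h x = \<kappa> * (h x * (\<mu>min * (1 / real l) ^ ?n))"
        unfolding \<kappa>_def using assms(11) lpos by (simp add: field_simps power_divide)
      also have "\<dots> \<le> \<kappa> * E"
        using E1 assms(11) lpos unfolding \<kappa>_def by (intro mult_left_mono) auto
      finally show ?thesis .
    qed
    have "AE x in distr M borel X. x \<in> cbox 0 1"
      using assms(4,9) by (subst AE_distr_iff) auto
    then show "AE x in distr M borel X. (norm (f x - fstar x))\<^sup>2
               \<le> \<kappa> * (\<integral>\<omega>. (norm (f (X \<omega>) - fstar (X \<omega>)))\<^sup>2 \<partial>M)"
      by eventually_elim (use main in \<open>simp add: h_def E_def\<close>)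
  qed
  then show ?thesis by blast
qed

end
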